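(* Let $\mathcal D$ be a family of sets of literals all of whose elements are non-trivial, and let $x\in X$ be a variable such that $\mathcal D$ is $x$-orthogonal. Then $$\mathbf I_x\Big(\bigvee_{C\in\mathcal D}\bigwedge_{\eta\in C}\eta\Big)=2\cdot\mathbf{JW}_x(\mathcal D).$$
   Context: $X$ is a fixed finite set of variables; literals are elements of $X\cup\{\overline z:z\in X\}$ and are interpreted as the Boolean functions $\mathbf u\mapsto\mathbf u(z)$ resp. $1-\mathbf u(z)$ on $\{0,1\}^X$. A family of sets of literals is a set of subsets of $X\cup\{\overline z:z\in X\}$. A set of literals $C$ is trivial if $z\in C$ and $\overline z\in C$ for some variable $z$. $\mathcal D$ is $x$-orthogonal if for all $C\ne C'$ in $\mathcal D$ there is a literal $\eta\notin\{x,\overline x\}$ with $\eta\in C$ and $\overline\eta\in C'$ (where $\overline{\overline z}=z$). The two-sided Jeroslow–Wang value is $\mathbf{JW}_x(\mathcal D)=\sum_{C\in\mathcal D:\,x\in C\text{ or }\overline x\in C}2^{-|C|}$. The influence is $\mathbf I_x(f)=\mathbb E[f_{x/1}\oplus f_{x/0}]$, expectation under the uniform distribution on $\{0,1\}^X$, where $f_{x/c}$ is $f$ with $x$ fixed to $c$. *)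

theory Defs
  imports Complex_Main
begin

text \<open>The variable set X is the (finite) universe of the type 'v.
  Literals are positive or negated variables; assignments are elements of
  {0,1}^X, represented as functions 'v => bool.\<close>

datatype 'v lit = Pos 'v | Neg 'v

fun lit_neg :: "'v lit \<Rightarrow> 'v lit" where
  "lit_neg (Pos z) = Neg z"
| "lit_neg (Neg z) = Pos z"

fun lit_val :: "'v lit \<Rightarrow> ('v \<Rightarrow> bool) \<Rightarrow> bool" where
  "lit_val (Pos z) u = u z"
| "lit_val (Neg z) u = (\<not> u z)"

definition trivial_clause :: "'v lit set \<Rightarrow> bool" where
  "trivial_clause C \<longleftrightarrow> (\<exists>z. Pos z \<in> C \<and> Neg z \<in> C)"

definition x_orthogonal :: "'v \<Rightarrow> 'v lit set set \<Rightarrow> bool" where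
  "x_orthogonal x D \<longleftrightarrow>
     (\<forall>C\<in>D. \<forall>C'\<in>D. C \<noteq> C' \<longrightarrow>
        (\<exists>\<eta>. \<eta> \<notin> {Pos x, Neg x} \<and> \<eta> \<in> C \<and> lit_neg \<eta> \<in> C'))"

definition JW :: "'v \<Rightarrow> 'v lit set set \<Rightarrow> real" where
  "JW x D = (\<Sum>C\<in>{C\<in>D. Pos x \<in> C \<or> Neg x \<in> C}. (1/2) ^ card C)"

definition dnf :: "'v lit set set \<Rightarrow> ('v \<Rightarrow> bool) \<Rightarrow> bool" where
  "dnf D u \<longleftrightarrow> (\<exists>C\<in>D. \<forall>\<eta>\<in>C. lit_val \<eta> u)"

definition uniform_expect :: "(('v::finite \<Rightarrow> bool) \<Rightarrow> real) \<Rightarrow> real" where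
  "uniform_expect g = (\<Sum>u\<in>(UNIV :: ('v \<Rightarrow> bool) set). g u) / real (card (UNIV :: ('v \<Rightarrow> bool) set))"

definition influence :: "'v::finite \<Rightarrow> (('v \<Rightarrow> bool) \<Rightarrow> bool) \<Rightarrow> real" where
  "influence x f = uniform_expect (\<lambda>u. of_bool (f (u(x := True)) \<noteq> f (u(x := False))))"

end

theory Submission
  imports Defs
begin

fun var :: "'v lit \<Rightarrow> 'v" where
  "var (Pos z) = z" | "var (Neg z) = z"

lemma finite_lits: "finite (UNIV :: ('v::finite) lit set)"
proof -
  have "(UNIV :: 'v lit set) = range Pos \<union> range Neg"
  proof (intro set_eqI iffI)
    fix l :: "'v lit" show "l \<in> range Pos \<union> range Neg" by (cases l) auto
  qed auto
  show ?thesis unfolding \<open>UNIV = _\<close> by simp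
qed

lemma lit_val_upd: "var l \<noteq> z \<Longrightarrow> lit_val l (u(z := b)) = lit_val l u"
  by (cases l) auto

lemma lit_val_neg: "lit_val (lit_neg l) u = (\<not> lit_val l u)"
  by (cases l) auto

lemma var_eq: "var \<eta> = var l \<Longrightarrow> \<eta> = l \<or> \<eta> = lit_neg l"
  by (cases \<eta>; cases l) auto

lemma lit_val_flip: "lit_val l (u(var l := \<not> u (var l))) = (\<not> lit_val l u)"
  by (cases l) auto

lemma count_sat:
  fixes C :: "('v::finite) lit set"
  assumes "finite C" "\<not> trivial_clause C"
  shows "real (card {u::'v\<Rightarrow>bool. \<forall>\<eta>\<in>C. lit_val \<eta> u}) = real (card (UNIV :: ('v\<Rightarrow>bool) set)) / 2 ^ card C"
  using assms
proof (induction C rule: finite_induct)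
  case empty
  then show ?case by simp
next
  case (insert l C)
  have ntC: "\<not> trivial_clause C" using insert.prems unfolding trivial_clause_def by blast
  have nl: "lit_neg l \<notin> C" using insert.prems unfolding trivial_clause_def
    by (cases l) auto
  define z where "z = var l"
  define S where "S = {u::'v\<Rightarrow>bool. \<forall>\<eta>\<in>C. lit_val \<eta> u}"
  define flip where "flip = (\<lambda>u::'v\<Rightarrow>bool. u(z := \<not> u z))"
  have fS: "u \<in> S \<Longrightarrow> flip u \<in> S" for u
  proof -
    assume "u \<in> S"
    { fix \<eta> assume "\<eta> \<in> C"
      then have "var \<eta> \<noteq> z" using insert.hyps(2) nl var_eq unfolding z_def by blast
      then have "lit_val \<eta> (flip u) = lit_val \<eta> u" unfolding flip_def by (rule lit_val_upd) }
    then show ?thesis using \<open>u \<in> S\<close> unfolding S_def by auto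
  qed
  have ff: "flip (flip u) = u" for u unfolding flip_def by auto
  have fl: "lit_val l (flip u) = (\<not> lit_val l u)" for u
    unfolding flip_def z_def by (rule lit_val_flip)
  define A where "A = S \<inter> {u. lit_val l u}"
  define B where "B = S \<inter> {u. \<not> lit_val l u}"
  have "bij_betw flip A B"
    unfolding bij_betw_def
  proof
    show "inj_on flip A" using ff by (metis inj_onI)
    show "flip ` A = B"
    proof
      show "flip ` A \<subseteq> B" unfolding A_def B_def using fS fl by auto
      show "B \<subseteq> flip ` A"
      proof
        fix u assume "u \<in> B"
        then have "flip u \<in> A" unfolding A_def B_def using fS fl by auto
        then show "u \<in> flip ` A" using ff by (metis image_eqI)
      qed
    qed
  qed
  then have cAB: "card A = card B" by (rule bij_betw_same_card)
  have "card S = card A + card B"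
  proof -
    have "S = A \<union> B" "A \<inter> B = {}" unfolding A_def B_def by auto
    then show ?thesis by (simp add: card_Un_disjoint)
  qed
  then have "real (card A) = real (card S) / 2" using cAB by simp
  moreover have "{u::'v\<Rightarrow>bool. \<forall>\<eta>\<in>insert l C. lit_val \<eta> u} = A"
    unfolding A_def S_def by auto
  moreover have "real (card S) = real (card (UNIV :: ('v\<Rightarrow>bool) set)) / 2 ^ card C"
    using insert.IH ntC unfolding S_def by blast
  ultimately show ?case using insert.hyps by simp
qed

theorem mainTheorem9:
  fixes D :: "('v::finite) lit set set" and x :: 'v
  assumes "\<forall>C\<in>D. \<not> trivial_clause C"
    and "x_orthogonal x D"
  shows "influence x (dnf D) = 2 * JW x D"
proof -
  define R where "R = (\<lambda>C::'v lit set. C - {Pos x, Neg x})"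
  define P where "P = (\<lambda>C u. \<forall>\<eta>\<in>R C. lit_val \<eta> u)"
  define Dx where "Dx = {C\<in>D. Pos x \<in> C \<or> Neg x \<in> C}"
  have finC: "finite (C :: 'v lit set)" for C by (rule finite_subset[OF subset_UNIV finite_lits])
  have finD: "finite D"
  proof (rule finite_subset[of D "Pow (UNIV :: 'v lit set)"])
    show "finite (Pow (UNIV :: 'v lit set))" using finite_lits[where 'v='v] by (simp only: finite_Pow_iff)
  qed simp
  have finDx: "finite Dx" unfolding Dx_def using finD by simp
  have Rupd: "lit_val \<eta> (u(x := b)) = lit_val \<eta> u" if "\<eta> \<in> R C" for \<eta> u b C
    using that unfolding R_def by (cases \<eta>) auto
  have uniq: "C = C'" if "C \<in> D" "C' \<in> D" "P C u" "P C' u" for C C' u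
  proof (rule ccontr)
    assume "C \<noteq> C'"
    have "\<exists>\<eta>. \<eta> \<notin> {Pos x, Neg x} \<and> \<eta> \<in> C \<and> lit_neg \<eta> \<in> C'"
      using assms(2) that(1,2) \<open>C \<noteq> C'\<close> unfolding x_orthogonal_def by blast
    then obtain \<eta> where h: "\<eta> \<notin> {Pos x, Neg x}" "\<eta> \<in> C" "lit_neg \<eta> \<in> C'"
      by blast
    have "\<eta> \<in> R C" using h unfolding R_def by auto
    moreover have "lit_neg \<eta> \<in> R C'" using h unfolding R_def by (cases \<eta>) auto
    ultimately have "lit_val \<eta> u" "lit_val (lit_neg \<eta>) u" using that(3,4) unfolding P_def by blast+
    then show False by (simp add: lit_val_neg)
  qed
  have sat_P: "P C u" if "\<forall>\<eta>\<in>C. lit_val \<eta> (u(x := b))" for C u b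
    unfolding P_def
  proof
    fix \<eta> assume e: "\<eta> \<in> R C"
    then have "lit_val \<eta> (u(x := b))" using that unfolding R_def by blast
    then show "lit_val \<eta> u" using Rupd[OF e] by simp
  qed
  have pt: "of_bool (dnf D (u(x := True)) \<noteq> dnf D (u(x := False)))
      = (\<Sum>C\<in>Dx. of_bool (P C u) :: real)" for u
  proof (cases "\<exists>C\<in>D. P C u")
    case False
    then have "\<not> dnf D (u(x := b))" for b unfolding dnf_def using sat_P by blast
    moreover have "(\<Sum>C\<in>Dx. of_bool (P C u) :: real) = 0"
      using False unfolding Dx_def by (auto intro: sum.neutral)
    ultimately show ?thesis by simp
  next
    case True
    then obtain C0 where C0: "C0 \<in> D" "P C0 u" by blast
    have dn: "dnf D (u(x := b)) = ((Pos x \<in> C0 \<longrightarrow> b) \<and> (Neg x \<in> C0 \<longrightarrow> \<not> b))" for b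
    proof
      assume "dnf D (u(x := b))"
      then obtain C where "C \<in> D" "\<forall>\<eta>\<in>C. lit_val \<eta> (u(x := b))" unfolding dnf_def by blast
      moreover then have "C = C0" using uniq C0 sat_P by blast
      ultimately show "(Pos x \<in> C0 \<longrightarrow> b) \<and> (Neg x \<in> C0 \<longrightarrow> \<not> b)" by force
    next
      assume a: "(Pos x \<in> C0 \<longrightarrow> b) \<and> (Neg x \<in> C0 \<longrightarrow> \<not> b)"
      have "\<forall>\<eta>\<in>C0. lit_val \<eta> (u(x := b))"
      proof
        fix \<eta> assume "\<eta> \<in> C0"
        show "lit_val \<eta> (u(x := b))"
        proof (cases "\<eta> \<in> R C0")
          case True then show ?thesis using Rupd C0(2) unfolding P_def by blast
        next
          case False then have "\<eta> = Pos x \<or> \<eta> = Neg x" using \<open>\<eta> \<in> C0\<close> unfolding R_def by auto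
          then show ?thesis using a \<open>\<eta> \<in> C0\<close> by auto
        qed
      qed
      then show "dnf D (u(x := b))" using C0 unfolding dnf_def by blast
    qed
    have sumeq: "(\<Sum>C\<in>Dx. of_bool (P C u) :: real) = of_bool (C0 \<in> Dx)"
    proof -
      have "(\<Sum>C\<in>Dx. of_bool (P C u) :: real) = (\<Sum>C\<in>Dx. of_bool (C = C0))"
        apply (rule sum.cong[OF refl])
        using uniq C0 unfolding Dx_def by auto
      also have "\<dots> = of_bool (C0 \<in> Dx)" using finDx by (simp add: sum.delta')
      finally show ?thesis .
    qed
    have nt: "\<not> (Pos x \<in> C0 \<and> Neg x \<in> C0)" using assms(1) C0(1) unfolding trivial_clause_def by blast
    show ?thesis unfolding sumeq dn using nt unfolding Dx_def using C0(1) by auto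
  qed
  define N where "N = real (card (UNIV :: ('v\<Rightarrow>bool) set))"
  have Npos: "N > 0" unfolding N_def by (simp add: card_gt_0_iff)
  have cardR: "card (R C) = card C - 1" if "C \<in> Dx" for C
  proof -
    have nt: "\<not> (Pos x \<in> C \<and> Neg x \<in> C)" using assms(1) that unfolding Dx_def trivial_clause_def by blast
    have "card (C \<inter> {Pos x, Neg x}) = 1"
    proof (cases "Pos x \<in> C")
      case True
      then have "C \<inter> {Pos x, Neg x} = {Pos x}" using nt by blast
      then show ?thesis by simp
    next
      case False
      then have "Neg x \<in> C" using that unfolding Dx_def by blast
      then have "C \<inter> {Pos x, Neg x} = {Neg x}" using False by blast
      then show ?thesis by simp
    qed
    moreover have "card (R C) = card C - card (C \<inter> {Pos x, Neg x})"
      unfolding R_def by (rule card_Diff_subset_Int) (simp add: finC)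
    ultimately show ?thesis by simp
  qed
  have cardpos: "card C \<ge> 1" if "C \<in> Dx" for C
    proof -
    have "C \<noteq> {}" using that unfolding Dx_def by auto
    then show ?thesis using finC[of C] by (simp add: Suc_le_eq card_gt_0_iff)
  qed
  have cnt: "real (card {u. P C u}) = N / 2 ^ (card C - 1)" if "C \<in> Dx" for C
  proof -
    have "\<not> trivial_clause (R C)" using assms(1) that unfolding Dx_def R_def trivial_clause_def by blast
    then have "real (card {u::'v\<Rightarrow>bool. \<forall>\<eta>\<in>R C. lit_val \<eta> u}) = N / 2 ^ card (R C)"
      unfolding N_def by (intro count_sat finC)
    then show ?thesis using cardR[OF that] unfolding P_def by simp
  qed
  have "(\<Sum>u\<in>(UNIV::('v\<Rightarrow>bool) set). of_bool (dnf D (u(x := True)) \<noteq> dnf D (u(x := False))) :: real)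
      = (\<Sum>u\<in>UNIV. \<Sum>C\<in>Dx. of_bool (P C u) :: real)" using pt by simp
  also have "\<dots> = (\<Sum>C\<in>Dx. \<Sum>u\<in>UNIV. of_bool (P C u) :: real)" by (rule sum.swap)
  also have "\<dots> = (\<Sum>C\<in>Dx. real (card {u. P C u}))"
    by (simp add: sum.If_cases)
  also have "\<dots> = (\<Sum>C\<in>Dx. N / 2 ^ (card C - 1))" using cnt by simp
  also have "\<dots> = (\<Sum>C\<in>Dx. N * (2 * (1/2) ^ card C))"
  proof (rule sum.cong[OF refl])
    fix C assume "C \<in> Dx"
    then have "1 \<le> card C" by (rule cardpos)
    then obtain k where "card C = Suc k" by (cases "card C") auto
    then show "N / 2 ^ (card C - 1) = N * (2 * (1/2) ^ card C)" by (simp add: power_divide field_simps)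
  qed
  finally have S: "(\<Sum>u\<in>(UNIV::('v\<Rightarrow>bool) set). of_bool (dnf D (u(x := True)) \<noteq> dnf D (u(x := False))) :: real)
      = N * (2 * JW x D)" unfolding JW_def Dx_def[symmetric] by (simp add: sum_distrib_left)
  show ?thesis unfolding influence_def uniform_expect_def S N_def[symmetric] using Npos by simp
qed

end
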